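(* Let $\mathfrak g$ be a finite-dimensional Lie algebra over a field $\mathbb K$ of characteristic zero, and let $\mathfrak h_m=V\oplus\mathbb K e\subset\mathfrak g$ be an ideal isomorphic to the Heisenberg algebra, such that the center of $\mathfrak g$ coincides with the center $\mathbb K e$ of $\mathfrak h_m$. Then there exists a subalgebra $\mathfrak b\subset\mathfrak g$ such that $\mathfrak g=\mathfrak b\oplus V$ (direct sum of vector spaces) and $\mathfrak b\cap\mathfrak h_m=\mathbb K e$. Moreover $V$ is invariant under $\operatorname{ad}_\beta$ for all $\beta\in\mathfrak b$, and each $\operatorname{ad}_\beta|_V$ lies in the symplectic Lie algebra $sp(V,\omega)$.
   Context: The Heisenberg structure: $\dim V=2m$, $e$ central in $\mathfrak h_m$, and $[\xi_1,\xi_2]=\omega(\xi_1,\xi_2)e$ for $\xi_1,\xi_2\in V$, where $\omega$ is a symplectic form on $V$. *)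

theory Defs
  imports Complex_Main
begin

definition lie_algebra :: "('k::field \<Rightarrow> 'v::ab_group_add \<Rightarrow> 'v) \<Rightarrow> ('v \<Rightarrow> 'v \<Rightarrow> 'v) \<Rightarrow> bool" where
  "lie_algebra scale br \<longleftrightarrow>
     vector_space scale \<and>
     (\<forall>a x y z. br (scale a x + y) z = scale a (br x z) + br y z) \<and>
     (\<forall>a x y z. br z (scale a x + y) = scale a (br z x) + br z y) \<and>
     (\<forall>x. br x x = 0) \<and>
     (\<forall>x y z. br x (br y z) + br y (br z x) + br z (br x y) = 0)"

definition fin_dim :: "('k::field \<Rightarrow> 'v::ab_group_add \<Rightarrow> 'v) \<Rightarrow> bool" where
  "fin_dim scale \<longleftrightarrow> (\<exists>B. finite B \<and> module.span scale B = UNIV)"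

definition lie_subalgebra :: "('k::field \<Rightarrow> 'v::ab_group_add \<Rightarrow> 'v) \<Rightarrow> ('v \<Rightarrow> 'v \<Rightarrow> 'v) \<Rightarrow> 'v set \<Rightarrow> bool" where
  "lie_subalgebra scale br S \<longleftrightarrow> module.subspace scale S \<and> (\<forall>x\<in>S. \<forall>y\<in>S. br x y \<in> S)"

definition lie_ideal :: "('k::field \<Rightarrow> 'v::ab_group_add \<Rightarrow> 'v) \<Rightarrow> ('v \<Rightarrow> 'v \<Rightarrow> 'v) \<Rightarrow> 'v set \<Rightarrow> bool" where
  "lie_ideal scale br S \<longleftrightarrow> module.subspace scale S \<and> (\<forall>x. \<forall>y\<in>S. br x y \<in> S)"

definition lie_center :: "('v::ab_group_add \<Rightarrow> 'v \<Rightarrow> 'v) \<Rightarrow> 'v set \<Rightarrow> 'v set" where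
  "lie_center br S = {z\<in>S. \<forall>x\<in>S. br z x = 0}"

definition symplectic_form :: "('k::field \<Rightarrow> 'v::ab_group_add \<Rightarrow> 'v) \<Rightarrow> 'v set \<Rightarrow> ('v \<Rightarrow> 'v \<Rightarrow> 'k) \<Rightarrow> bool" where
  "symplectic_form scale V \<omega> \<longleftrightarrow>
     (\<forall>a. \<forall>x\<in>V. \<forall>y\<in>V. \<forall>z\<in>V. \<omega> (scale a x + y) z = a * \<omega> x z + \<omega> y z) \<and>
     (\<forall>a. \<forall>x\<in>V. \<forall>y\<in>V. \<forall>z\<in>V. \<omega> z (scale a x + y) = a * \<omega> z x + \<omega> z y) \<and>
     (\<forall>x\<in>V. \<omega> x x = 0) \<and>
     (\<forall>x\<in>V. (\<forall>y\<in>V. \<omega> x y = 0) \<longrightarrow> x = 0)"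

definition in_sp :: "('k::field \<Rightarrow> 'v::ab_group_add \<Rightarrow> 'v) \<Rightarrow> 'v set \<Rightarrow> ('v \<Rightarrow> 'v \<Rightarrow> 'k) \<Rightarrow> ('v \<Rightarrow> 'v) \<Rightarrow> bool" where
  "in_sp scale V \<omega> A \<longleftrightarrow>
     (\<forall>x\<in>V. A x \<in> V) \<and>
     (\<forall>a. \<forall>x\<in>V. \<forall>y\<in>V. A (scale a x + y) = scale a (A x) + A y) \<and>
     (\<forall>x\<in>V. \<forall>y\<in>V. \<omega> (A x) y + \<omega> x (A y) = 0)"

end

theory Submission imports Defs begin

lemma lin_zero_on_span:
  fixes scale :: "'k::field \<Rightarrow> 'v::ab_group_add \<Rightarrow> 'v" and g :: "'v \<Rightarrow> 'k"
  assumes vs: "vector_space scale"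
  and V: "module.subspace scale V" and BV: "B \<subseteq> V"
  and g: "\<forall>a. \<forall>x\<in>V. \<forall>y\<in>V. g (scale a x + y) = a * g x + g y"
  and gB: "\<forall>b\<in>B. g b = 0"
  and w: "w \<in> module.span scale B" and wV: "w \<in> V"
  shows "g w = 0"
proof -
  interpret vs: vector_space scale by (rule vs)
  have g0: "g 0 = 0"
  proof -
    have "g (scale 1 0 + 0) = 1 * g 0 + g 0" using g vs.subspace_0[OF V] by blast
    then have "g 0 = g 0 + g 0" by simp
    then show ?thesis by (metis add_cancel_right_right)
  qed
  have "w \<in> V \<longrightarrow> g w = 0" using w
  proof (induction rule: vs.span_induct_alt)
    case base then show ?case by (simp add: g0)
  next
    case (step c x y)
    show ?case
    proof
      assume cxy: "scale c x + y \<in> V"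
      have xV: "x \<in> V" using step BV by auto
      have "y = (scale c x + y) - scale c x" by simp
      also have "\<dots> \<in> V" using cxy xV vs.subspace_diff[OF V] vs.subspace_scale[OF V] by blast
      finally have yV: "y \<in> V" .
      then have "g y = 0" using step by blast
      then show "g (scale c x + y) = 0" using g xV yV gB step by simp
    qed
  qed
  then show ?thesis using wV by blast
qed

lemma coeff_eq:
  fixes scale :: "'k::field \<Rightarrow> 'v::ab_group_add \<Rightarrow> 'v"
  assumes vs: "vector_space scale" and fB: "finite B"
  and iB: "\<not> module.dependent scale B"
  and eq: "(\<Sum>b\<in>B. scale (c b) b) = (\<Sum>b\<in>B. scale (d b) b)"
  and b: "b \<in> B"
  shows "c b = d b"
proof -
  interpret vs: vector_space scale by (rule vs)
  have "(\<Sum>b\<in>B. scale (c b - d b) b) = 0"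
    using eq by (simp add: vs.scale_left_diff_distrib sum_subtractf)
  then have "c b - d b = 0" using vs.independentD[OF iB fB order_refl, of "\<lambda>b. c b - d b"] b by blast
  then show ?thesis by simp
qed

lemma riesz:
  fixes scale :: "'k::field \<Rightarrow> 'v::ab_group_add \<Rightarrow> 'v" and \<omega> :: "'v \<Rightarrow> 'v \<Rightarrow> 'k" and f :: "'v \<Rightarrow> 'k"
  assumes vs: "vector_space scale"
  and V: "module.subspace scale V"
  and fB: "finite B" and BV: "B \<subseteq> V" and iB: "\<not> module.dependent scale B" and VB: "V \<subseteq> module.span scale B"
  and om1: "\<forall>a. \<forall>x\<in>V. \<forall>y\<in>V. \<forall>z\<in>V. \<omega> (scale a x + y) z = a * \<omega> x z + \<omega> y z"
  and om2: "\<forall>a. \<forall>x\<in>V. \<forall>y\<in>V. \<forall>z\<in>V. \<omega> z (scale a x + y) = a * \<omega> z x + \<omega> z y"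
  and nd: "\<forall>x\<in>V. (\<forall>y\<in>V. \<omega> x y = 0) \<longrightarrow> x = 0"
  and f: "\<forall>a. \<forall>x\<in>V. \<forall>y\<in>V. f (scale a x + y) = a * f x + f y"
  shows "\<exists>u\<in>V. \<forall>w\<in>V. \<omega> u w = f w"
proof -
  interpret vs: vector_space scale by (rule vs)
  define \<Phi> where "\<Phi> u = (\<Sum>b\<in>B. scale (\<omega> u b) b)" for u
  have \<Phi>V: "\<Phi> u \<in> V" for u
    unfolding \<Phi>_def using BV by (intro vs.subspace_sum[OF V] vs.subspace_scale[OF V]) auto
  have L: "\<Phi> (scale a u1 + u2) = scale a (\<Phi> u1) + \<Phi> u2" if "u1 \<in> V" "u2 \<in> V" for a u1 u2
  proof -
    have "\<Phi> (scale a u1 + u2) = (\<Sum>b\<in>B. scale (a * \<omega> u1 b + \<omega> u2 b) b)"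
      unfolding \<Phi>_def using om1 that BV by (intro sum.cong) auto
    also have "\<dots> = scale a (\<Phi> u1) + \<Phi> u2"
      unfolding \<Phi>_def by (simp add: vs.scale_left_distrib sum.distrib vs.scale_sum_right)
    finally show ?thesis .
  qed
  have Z: "u = 0" if "u \<in> V" "\<Phi> u = 0" for u
  proof -
    have "(\<Sum>b\<in>B. scale (\<omega> u b) b) = (\<Sum>b\<in>B. scale 0 b)" using that unfolding \<Phi>_def by simp
    then have "\<forall>b\<in>B. \<omega> u b = 0" using coeff_eq[OF vs fB iB, of "\<omega> u" "\<lambda>_. 0"] by simp
    then have "\<forall>w\<in>V. \<omega> u w = 0"
      using lin_zero_on_span[OF vs V BV, of "\<omega> u"] om2 that VB by blast
    then show ?thesis using nd that by blast
  qed
  have inj: "inj_on \<Phi> V"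
  proof (rule inj_onI)
    fix x y assume xy: "x \<in> V" "y \<in> V" "\<Phi> x = \<Phi> y"
    have "\<Phi> (scale (-1) y + x) = 0" using L[OF xy(2,1), of "-1"] xy by simp
    moreover have "scale (-1) y + x \<in> V" using xy V vs.subspace_add vs.subspace_scale by blast
    ultimately have "scale (-1) y + x = 0" using Z by blast
    then show "x = y" by (simp add: add.commute eq_neg_iff_add_eq_0)
  qed
  define D where "D = \<Phi> ` B"
  have DV: "D \<subseteq> V" unfolding D_def using \<Phi>V by auto
  have spanD: "\<exists>u\<in>module.span scale C. \<Phi> u = y" if yC: "y \<in> module.span scale (\<Phi> ` C)" and CV: "C \<subseteq> V" for y C
    using yC
  proof (induction rule: vs.span_induct_alt)
    case base
    have "\<Phi> 0 = 0" using Z vs.subspace_0[OF V] L[of 0 0 1] V by (simp add: vs.subspace_0)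
    then show ?case using vs.span_zero by blast
  next
    case (step c x y)
    obtain u where u: "u \<in> module.span scale C" "\<Phi> u = y" using step by blast
    obtain x' where x': "x' \<in> C" "x = \<Phi> x'" using step by blast
    have "u \<in> V" using u(1) vs.span_minimal[OF CV V] by blast
    then have "\<Phi> (scale c x' + u) = scale c x + y" using L[of x' u c] x' u CV by blast
    moreover have "scale c x' + u \<in> module.span scale C"
      using u x' by (meson vs.span_add vs.span_base vs.span_scale)
    ultimately show ?case by blast
  qed
  have indD: "\<not> module.dependent scale D"
  proof
    assume "module.dependent scale D"
    then obtain a where a: "a \<in> D" "a \<in> module.span scale (D - {a})" unfolding vs.dependent_def by blast
    obtain b0 where b0: "b0 \<in> B" "a = \<Phi> b0" using a D_def by blast
    have "D - {a} \<subseteq> \<Phi> ` (B - {b0})" unfolding D_def using b0 by auto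
    then have "a \<in> module.span scale (\<Phi> ` (B - {b0}))" using a vs.span_mono by blast
    then obtain u where u: "u \<in> module.span scale (B - {b0})" "\<Phi> u = a"
      using spanD[of a "B - {b0}"] BV by blast
    have "u \<in> V" using u(1) vs.span_minimal[of "B - {b0}" V] BV V by blast
    then have "u = b0" using inj b0 u BV by (auto dest: inj_onD)
    then have "b0 \<in> module.span scale (B - {b0})" using u by simp
    then show False using iB b0 unfolding vs.dependent_def by blast
  qed
  have cardD: "card D = card B" unfolding D_def using inj BV by (simp add: card_image inj_on_subset)
  have surj: "V \<subseteq> module.span scale D"
  proof
    fix t assume tV: "t \<in> V"
    show "t \<in> module.span scale D"
    proof (rule ccontr)
      assume nt: "t \<notin> module.span scale D"
      have i2: "\<not> module.dependent scale (insert t D)" using vs.independent_insertI[OF nt indD] .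
      have "insert t D \<subseteq> module.span scale B" using tV DV VB by auto
      then have "card (insert t D) \<le> card B" using vs.independent_span_bound[OF fB i2] by blast
      moreover have "finite D" unfolding D_def using fB by simp
      moreover have "t \<notin> D" using nt vs.span_base by blast
      ultimately show False using cardD by simp
    qed
  qed
  define t where "t = (\<Sum>b\<in>B. scale (f b) b)"
  have tV: "t \<in> V" unfolding t_def using BV by (intro vs.subspace_sum[OF V] vs.subspace_scale[OF V]) auto
  obtain u where u: "u \<in> module.span scale B" "\<Phi> u = t"
    using spanD[of t B] surj tV BV D_def by blast
  have uV: "u \<in> V" using u(1) vs.span_minimal[OF BV V] by blast
  have "\<forall>b\<in>B. \<omega> u b = f b" using coeff_eq[OF vs fB iB, of "\<omega> u" f] u(2) unfolding \<Phi>_def t_def by blast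
  then have "\<forall>b\<in>B. \<omega> u b - f b = 0" by simp
  moreover have "\<forall>a. \<forall>x\<in>V. \<forall>y\<in>V. \<omega> u (scale a x + y) - f (scale a x + y) = a * (\<omega> u x - f x) + (\<omega> u y - f y)"
    using om2 f uV by (simp add: algebra_simps)
  ultimately have "\<forall>w\<in>V. \<omega> u w - f w = 0"
    using lin_zero_on_span[OF vs V BV, of "\<lambda>w. \<omega> u w - f w"] VB by blast
  then show ?thesis using uV by auto
qed


theorem lemma6:
  fixes scale :: "'k::field_char_0 \<Rightarrow> 'v::ab_group_add \<Rightarrow> 'v"
    and br :: "'v \<Rightarrow> 'v \<Rightarrow> 'v"
    and V :: "'v set" and e :: 'v and \<omega> :: "'v \<Rightarrow> 'v \<Rightarrow> 'k" and m :: nat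
  defines "h \<equiv> {v + scale a e | v a. v \<in> V}"
  assumes lie: "lie_algebra scale br"
    and fd: "fin_dim scale"
    and V_sub: "module.subspace scale V"
    and dimV: "vector_space.dim scale V = 2 * m"
    and e_ne: "e \<noteq> 0"
    and e_notin: "e \<notin> V"
    and symp: "symplectic_form scale V \<omega>"
    and heis: "\<forall>x\<in>V. \<forall>y\<in>V. br x y = scale (\<omega> x y) e"
    and e_central_h: "\<forall>x\<in>h. br e x = 0"
    and ideal: "lie_ideal scale br h"
    and center_h: "lie_center br h = module.span scale {e}"
    and center_g: "lie_center br UNIV = module.span scale {e}"
  shows "\<exists>b. lie_subalgebra scale br b
           \<and> {x + y | x y. x \<in> b \<and> y \<in> V} = UNIV \<and> b \<inter> V = {0}
           \<and> b \<inter> h = module.span scale {e}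
           \<and> (\<forall>\<beta>\<in>b. \<forall>v\<in>V. br \<beta> v \<in> V)
           \<and> (\<forall>\<beta>\<in>b. in_sp scale V \<omega> (br \<beta>))"
proof -
  have vs: "vector_space scale" using lie unfolding lie_algebra_def by blast
  interpret vs: vector_space scale by (rule vs)
  have brL: "br (scale a x + y) z = scale a (br x z) + br y z" for a x y z
    using lie unfolding lie_algebra_def by blast
  have brR: "br z (scale a x + y) = scale a (br z x) + br z y" for a x y z
    using lie unfolding lie_algebra_def by blast
  have alt: "br x x = 0" for x using lie unfolding lie_algebra_def by blast
  have jac: "br x (br y z) + br y (br z x) + br z (br x y) = 0" for x y z
    using lie unfolding lie_algebra_def by blast
  have br0l: "br 0 z = 0" for z
  proof -
    have "br 0 z = br 0 z + br 0 z" using brL[of 1 0 0 z] by simp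
    then show ?thesis by (metis add_cancel_right_right)
  qed
  have br0r: "br z 0 = 0" for z
  proof -
    have "br z 0 = br z 0 + br z 0" using brR[of z 1 0 0] by simp
    then show ?thesis by (metis add_cancel_right_right)
  qed
  have braddl: "br (x + y) z = br x z + br y z" for x y z using brL[of 1 x y z] by simp
  have braddr: "br z (x + y) = br z x + br z y" for x y z using brR[of z 1 x y] by simp
  have brscl: "br (scale a x) z = scale a (br x z)" for a x z using brL[of a x 0 z] by (simp add: br0l)
  have brscr: "br z (scale a x) = scale a (br z x)" for a x z using brR[of z a x 0] by (simp add: br0r)
  have brnegl: "br (- x) z = - br x z" for x z using brscl[of "-1" x z] by simp
  have brnegr: "br z (- x) = - br z x" for x z using brscr[of z "-1" x] by simp
  have brdiffl: "br (x - y) z = br x z - br y z" for x y z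
    using braddl[of x "-y" z] brnegl[of y z] by (simp only: diff_conv_add_uminus)
  have anti: "br x y = - br y x" for x y
  proof -
    have "br (x + y) (x + y) = (br x x + br y x) + (br x y + br y y)" by (simp only: braddl braddr)
    then have "0 = br y x + br x y" by (simp add: alt)
    then show ?thesis by (metis add.commute eq_neg_iff_add_eq_0)
  qed
  have ecent: "br e x = 0" for x
  proof -
    have "e \<in> lie_center br UNIV" using center_g vs.span_base by auto
    then show ?thesis unfolding lie_center_def by blast
  qed
  have ecent2: "br x e = 0" for x using ecent anti[of x e] by simp
  have om1: "\<forall>a. \<forall>x\<in>V. \<forall>y\<in>V. \<forall>z\<in>V. \<omega> (scale a x + y) z = a * \<omega> x z + \<omega> y z"
    and om2: "\<forall>a. \<forall>x\<in>V. \<forall>y\<in>V. \<forall>z\<in>V. \<omega> z (scale a x + y) = a * \<omega> z x + \<omega> z y"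
    and omalt: "\<forall>x\<in>V. \<omega> x x = 0"
    and nd: "\<forall>x\<in>V. (\<forall>y\<in>V. \<omega> x y = 0) \<longrightarrow> x = 0"
    using symp unfolding symplectic_form_def by blast+
  have omanti: "\<omega> x y = - \<omega> y x" if "x \<in> V" "y \<in> V" for x y
  proof -
    have xy: "x + y \<in> V" using that vs.subspace_add[OF V_sub] by blast
    have 1: "\<omega> (x+y) (x+y) = \<omega> x (x+y) + \<omega> y (x+y)" using om1[rule_format, where a=1 and x=x and y=y and z="x+y"] that xy by simp
    have 2: "\<omega> x (x+y) = \<omega> x x + \<omega> x y" using om2[rule_format, where a=1 and x=x and y=y and z=x] that by simp
    have 3: "\<omega> y (x+y) = \<omega> y x + \<omega> y y" using om2[rule_format, where a=1 and x=x and y=y and z=y] that by simp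
    have "0 = \<omega> x y + \<omega> y x" using 1 2 3 omalt that xy by simp
    then show ?thesis by (metis eq_neg_iff_add_eq_0)
  qed
  have scV: "c = 0" if "scale c e \<in> V" for c
  proof (rule ccontr)
    assume "c \<noteq> 0"
    then have "e = scale (inverse c) (scale c e)" by simp
    also have "\<dots> \<in> V" using that vs.subspace_scale[OF V_sub] by blast
    finally show False using e_notin by blast
  qed
  have uniq: "a = a'" if "v \<in> V" "v' \<in> V" "v + scale a e = v' + scale a' e" for v v' a a'
  proof -
    have "scale (a - a') e = v' - v" using that(3)
      by (simp add: vs.scale_left_diff_distrib algebra_simps)
    also have "\<dots> \<in> V" using that vs.subspace_diff[OF V_sub] by blast
    finally show ?thesis using scV[of "a - a'"] by simp
  qed
  define b where "b = {x. \<forall>v\<in>V. br x v \<in> V}"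
  have sub: "lie_subalgebra scale br b"
    unfolding lie_subalgebra_def
  proof
    show "vs.subspace b"
    proof (rule vs.subspaceI)
      show "0 \<in> b" unfolding b_def using br0l vs.subspace_0[OF V_sub] by simp
      show "x + y \<in> b" if "x \<in> b" "y \<in> b" for x y
        using that unfolding b_def by (simp add: braddl vs.subspace_add[OF V_sub])
      show "scale c x \<in> b" if "x \<in> b" for c x
        using that unfolding b_def by (simp add: brscl vs.subspace_scale[OF V_sub])
    qed
    show "\<forall>x\<in>b. \<forall>y\<in>b. br x y \<in> b"
    proof (intro ballI)
      fix x y assume xy: "x \<in> b" "y \<in> b"
      show "br x y \<in> b" unfolding b_def
      proof (intro CollectI ballI)
        fix v assume v: "v \<in> V"
        have "br (br x y) v = - br v (br x y)" by (rule anti)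
        also have "\<dots> = br x (br y v) + br y (br v x)"
          using jac[of x y v] by (metis eq_neg_iff_add_eq_0)
        also have "\<dots> = br x (br y v) - br y (br x v)"
          using anti[of v x] brnegr by simp
        also have "\<dots> \<in> V" using xy v unfolding b_def
          by (simp add: vs.subspace_diff[OF V_sub])
        finally show "br (br x y) v \<in> V" .
      qed
    qed
  qed
  obtain S0 where S0: "finite S0" "module.span scale S0 = UNIV" using fd unfolding fin_dim_def by blast
  obtain B where B: "B \<subseteq> V" "\<not> vs.dependent B" "V \<subseteq> vs.span B" by (rule vs.basis_exists[of V])
  have fB: "finite B" using vs.independent_span_bound[OF S0(1) B(2)] S0(2) by simp
  have sum: "{x + y | x y. x \<in> b \<and> y \<in> V} = UNIV"
  proof -
    have "x \<in> {x + y | x y. x \<in> b \<and> y \<in> V}" for x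
    proof -
      have inh: "\<exists>v a. v \<in> V \<and> br x w = v + scale a e" if "w \<in> V" for w
      proof -
        have "w \<in> h" unfolding h_def using that by force
        then have "br x w \<in> h" using ideal unfolding lie_ideal_def by blast
        then show ?thesis unfolding h_def by blast
      qed
      define f where "f w = (SOME a. \<exists>v\<in>V. br x w = v + scale a e)" for w
      have fP: "br x w - scale (f w) e \<in> V" if "w \<in> V" for w
      proof -
        have "\<exists>a. \<exists>v\<in>V. br x w = v + scale a e" using inh[OF that] by blast
        then have "\<exists>v\<in>V. br x w = v + scale (f w) e" unfolding f_def by (rule someI_ex)
        then show ?thesis by force
      qed
      have flin: "\<forall>a. \<forall>w1\<in>V. \<forall>w2\<in>V. f (scale a w1 + w2) = a * f w1 + f w2"
      proof (intro allI ballI)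
        fix c w1 w2 assume w: "w1 \<in> V" "w2 \<in> V"
        have w12: "scale c w1 + w2 \<in> V" using w vs.subspace_add[OF V_sub] vs.subspace_scale[OF V_sub] by blast
        define v1 where "v1 = br x w1 - scale (f w1) e"
        define v2 where "v2 = br x w2 - scale (f w2) e"
        define v3 where "v3 = br x (scale c w1 + w2) - scale (f (scale c w1 + w2)) e"
        have V123: "v1 \<in> V" "v2 \<in> V" "v3 \<in> V" using fP w w12 unfolding v1_def v2_def v3_def by auto
        have "v3 + scale (f (scale c w1 + w2)) e = br x (scale c w1 + w2)" unfolding v3_def by simp
        also have "\<dots> = scale c (v1 + scale (f w1) e) + (v2 + scale (f w2) e)"
          unfolding v1_def v2_def by (simp add: brR)
        also have "\<dots> = (scale c v1 + v2) + scale (c * f w1 + f w2) e"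
          by (simp add: vs.scale_right_distrib vs.scale_left_distrib add_ac)
        finally have eq3: "v3 + scale (f (scale c w1 + w2)) e = (scale c v1 + v2) + scale (c * f w1 + f w2) e" .
        have cv: "scale c v1 + v2 \<in> V"
          using V123 vs.subspace_add[OF V_sub] vs.subspace_scale[OF V_sub] by blast
        show "f (scale c w1 + w2) = c * f w1 + f w2"
          using uniq[OF V123(3) cv eq3] .
      qed
      obtain u where u: "u \<in> V" "\<forall>w\<in>V. \<omega> u w = f w"
        using riesz[OF vs V_sub fB B(1) B(2) B(3) om1 om2 nd flin] by blast
      have "x - u \<in> b" unfolding b_def
      proof (intro CollectI ballI)
        fix w assume w: "w \<in> V"
        have "br (x - u) w = br x w - scale (f w) e" using heis u w by (simp add: brdiffl)
        then show "br (x - u) w \<in> V" using fP w by simp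
      qed
      moreover have "x = (x - u) + u" by simp
      ultimately show ?thesis using u by blast
    qed
    then show ?thesis by blast
  qed
  have capV: "b \<inter> V = {0}"
  proof
    show "b \<inter> V \<subseteq> {0}"
    proof
      fix v assume v: "v \<in> b \<inter> V"
      have "\<forall>w\<in>V. \<omega> v w = 0"
      proof
        fix w assume "w \<in> V"
        then have "scale (\<omega> v w) e \<in> V" using v heis unfolding b_def by force
        then show "\<omega> v w = 0" by (rule scV)
      qed
      then show "v \<in> {0}" using nd v by blast
    qed
    show "{0} \<subseteq> b \<inter> V" using vs.subspace_0[OF V_sub] br0l unfolding b_def by simp
  qed
  have caph: "b \<inter> h = module.span scale {e}"
    unfolding vs.span_singleton
  proof
    show "b \<inter> h \<subseteq> range (\<lambda>k. scale k e)"
    proof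
      fix x assume x: "x \<in> b \<inter> h"
      then obtain v a where va: "v \<in> V" "x = v + scale a e" unfolding h_def by blast
      have "\<forall>w\<in>V. \<omega> v w = 0"
      proof
        fix w assume w: "w \<in> V"
        have "br x w = scale (\<omega> v w) e" using va heis w by (simp add: braddl brscl ecent)
        then have "scale (\<omega> v w) e \<in> V" using x w unfolding b_def by force
        then show "\<omega> v w = 0" by (rule scV)
      qed
      then have "v = 0" using nd va by blast
      then show "x \<in> range (\<lambda>k. scale k e)" using va by (auto intro: image_eqI[of _ _ a])
    qed
    show "range (\<lambda>k. scale k e) \<subseteq> b \<inter> h"
    proof
      fix x assume "x \<in> range (\<lambda>k. scale k e)"
      then obtain k where k: "x = scale k e" by blast
      have "x \<in> h" unfolding h_def using k vs.subspace_0[OF V_sub] by force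
      moreover have "x \<in> b" unfolding b_def using k by (simp add: brscl ecent vs.subspace_0[OF V_sub])
      ultimately show "x \<in> b \<inter> h" by blast
    qed
  qed
  have inv: "\<forall>\<beta>\<in>b. \<forall>v\<in>V. br \<beta> v \<in> V" unfolding b_def by blast
  have sp: "\<forall>\<beta>\<in>b. in_sp scale V \<omega> (br \<beta>)"
  proof
    fix \<beta> assume \<beta>: "\<beta> \<in> b"
    show "in_sp scale V \<omega> (br \<beta>)" unfolding in_sp_def
    proof (intro conjI)
      show "\<forall>x\<in>V. br \<beta> x \<in> V" using \<beta> unfolding b_def by blast
      show "\<forall>a. \<forall>x\<in>V. \<forall>y\<in>V. br \<beta> (scale a x + y) = scale a (br \<beta> x) + br \<beta> y"
        by (simp add: brR)
      show "\<forall>x\<in>V. \<forall>y\<in>V. \<omega> (br \<beta> x) y + \<omega> x (br \<beta> y) = 0"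
      proof (intro ballI)
        fix x y assume xy: "x \<in> V" "y \<in> V"
        have bx: "br \<beta> x \<in> V" and byy: "br \<beta> y \<in> V" using \<beta> xy unfolding b_def by auto
        have "0 = br \<beta> (br x y) + br x (br y \<beta>) + br y (br \<beta> x)" using jac by simp
        also have "\<dots> = - scale (\<omega> x (br \<beta> y)) e + scale (\<omega> y (br \<beta> x)) e"
          using xy bx byy heis by (simp add: brscr ecent2 anti[of y \<beta>] brnegr)
        also have "\<dots> = scale (- (\<omega> (br \<beta> x) y + \<omega> x (br \<beta> y))) e"
          using omanti[OF xy(2) bx] by (simp add: vs.scale_left_distrib vs.scale_left_diff_distrib add_ac)
        finally have "scale (- (\<omega> (br \<beta> x) y + \<omega> x (br \<beta> y))) e = 0" by simp
        then have "- (\<omega> (br \<beta> x) y + \<omega> x (br \<beta> y)) = 0" using e_ne vs.scale_eq_0_iff by blast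
        then show "\<omega> (br \<beta> x) y + \<omega> x (br \<beta> y) = 0" by (simp only: neg_equal_0_iff_equal)
      qed
    qed
  qed
  show ?thesis using sub sum capV caph inv sp by (intro exI[of _ b] conjI)
qed

end
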